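(* For every $\alpha\in\Gamma$ and every perfect matching $g'$ of $\{1,\dots,N\}$, $$\mathbb P(\mathfrak g_\alpha=g',\ I_\alpha=1)=\mathbb P(\mathfrak g=g')\,p_\alpha=\frac{1}{(N-1)!!}\cdot\frac{1}{((N-1))_{e(\alpha)}};$$ equivalently $\mathcal L(\mathfrak g_\alpha\mid I_\alpha=1)=\mathcal L(\mathfrak g)$, and hence $\mathcal L(J_{\beta\alpha},\beta\in\Gamma\mid I_\alpha=1)=\mathcal L(I_\beta,\beta\in\Gamma)$.
   Context: Degree sequence $(d_1,\dots,d_n)$, $N=\sum d_i$ even, half-edges $1,\dots,N$ with $d_i$ of them belonging to vertex $v_i$ ($s\in v_i$). $\mathfrak g$ is a uniformly random perfect matching of $\{1,\dots,N\}$. Index sets: $\Gamma_{11}$ = sets $\{\{s,t\}\}$ with $s\in v_i,t\in v_j$, $i<j$, $d_i=d_j=1$; $\Gamma_{12}$ = sets $\{\{s,u\},\{t,v\}\}$ with $s\in v_i$, $t\in v_j$, $i<j$, $d_i=d_j=1$, $u\ne v\in v_k$, $d_k=2$; $\Gamma_{21}$ = sets $\{\{s,t\}\}$ with $s<t\in v_i$; $\Gamma_{22}$ = sets $\{\{s,u\},\{t,v\}\}$ with $s<t\in v_i$, $u\ne v\in v_j$, $i<j$; $\Gamma$ is their disjoint union. Each $\alpha\in\Gamma$ is a set of $e(\alpha)\in\{1,2\}$ disjoint pairs ("edges"); $I_\alpha=1$ iff all pairs of $\alpha$ belong to $\mathfrak g$; $p_\alpha=\mathbb EI_\alpha=1/((N-1))_{e(\alpha)}$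 with $((m))_r=m(m-2)\cdots(m-2r+2)$. Switching construction: write the pairs of $\alpha$ as $\{s_{\ell,1},s_{\ell,2}\}$, $\ell=1,\dots,e=e(\alpha)$, ordered so that $s_{1,1}\wedge s_{1,2}<\dots<s_{e,1}\wedge s_{e,2}$. Let $B_{\alpha,\ell}$ be uniform on $\{1,\dots,N-2(e-\ell)-1\}$, all $B_{\alpha,\ell}$ (over all $\alpha,\ell$) and $\mathfrak g$ independent. If $I_\alpha=0$ put $\mathfrak g_\alpha=\mathfrak g$. If $I_\alpha=1$, set $g_0=\mathfrak g$ and for $\ell=1,\dots,e$: let $t_{\ell,1}$ be the $B_{\alpha,\ell}$-th smallest element of $\{1,\dots,N\}\setminus(\{s_{\ell,1}\wedge s_{\ell,2}\}\cup\bigcup_{m>\ell}\{s_{m,1},s_{m,2}\})$, $t_{\ell,2}$ its partner in $g_{\ell-1}$, and $g_\ell=(g_{\ell-1}\setminus\{\{s_{\ell,1},s_{\ell,2}\},\{t_{\ell,1},t_{\ell,2}\}\})\cup\{\{s_{\ell,1}\wedge s_{\ell,2},t_{\ell,1}\},\{s_{\ell,1}\vee s_{\ell,2},t_{\ell,2}\}\}$ (so $g_\ell=g_{\ell-1}$ if $t_{\ell,1}=s_{\ell,1}\vee s_{\ell,2}$); put $\mathfrak g_\alpha=g_e$. Finally $J_{\beta\alpha}=1$ iff all pairs of $\beta$ belong to $\mathfrak g_\alpha$. *)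

theory Defs
  imports "HOL-Probability.Probability"
begin

text \<open>Half-edges are the numbers 1..N. A perfect matching is a set of 2-element
  subsets of {1..N} such that every half-edge lies in exactly one of them.\<close>
definition perfect_matching :: "nat \<Rightarrow> nat set set \<Rightarrow> bool" where
  "perfect_matching N g \<longleftrightarrow>
     (\<forall>p\<in>g. card p = 2 \<and> p \<subseteq> {1..N}) \<and> (\<forall>s\<in>{1..N}. \<exists>!p. p \<in> g \<and> s \<in> p)"

definition PM :: "nat \<Rightarrow> nat set set set" where
  "PM N = {g. perfect_matching N g}"

fun dfact :: "nat \<Rightarrow> nat" where
  "dfact 0 = 1"
| "dfact (Suc 0) = 1"
| "dfact (Suc (Suc k)) = Suc (Suc k) * dfact k"

definition ffact2 :: "nat \<Rightarrow> nat \<Rightarrow> nat" where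
  "ffact2 m r = (\<Prod>i<r. m - 2 * i)"

text \<open>Vertex structure: half-edge s (1 \<le> s \<le> N) belongs to vertex vx s;
  d i is the degree of vertex i.  Index sets Gamma_11, Gamma_12, Gamma_21, Gamma_22.\<close>
definition Gamma11 :: "nat \<Rightarrow> (nat \<Rightarrow> nat) \<Rightarrow> (nat \<Rightarrow> nat) \<Rightarrow> nat set set set" where
  "Gamma11 N d vx = {{{s,t}} | s t. s \<in> {1..N} \<and> t \<in> {1..N} \<and> vx s < vx t
                       \<and> d (vx s) = 1 \<and> d (vx t) = 1}"

definition Gamma12 :: "nat \<Rightarrow> (nat \<Rightarrow> nat) \<Rightarrow> (nat \<Rightarrow> nat) \<Rightarrow> nat set set set" where
  "Gamma12 N d vx = {{{s,u},{t,v}} | s t u v. s \<in> {1..N} \<and> t \<in> {1..N} \<and> u \<in> {1..N} \<and> v \<in> {1..N}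
                       \<and> vx s < vx t \<and> d (vx s) = 1 \<and> d (vx t) = 1
                       \<and> u \<noteq> v \<and> vx u = vx v \<and> d (vx u) = 2}"

definition Gamma21 :: "nat \<Rightarrow> (nat \<Rightarrow> nat) \<Rightarrow> (nat \<Rightarrow> nat) \<Rightarrow> nat set set set" where
  "Gamma21 N d vx = {{{s,t}} | s t. s \<in> {1..N} \<and> t \<in> {1..N} \<and> s < t \<and> vx s = vx t}"

definition Gamma22 :: "nat \<Rightarrow> (nat \<Rightarrow> nat) \<Rightarrow> (nat \<Rightarrow> nat) \<Rightarrow> nat set set set" where
  "Gamma22 N d vx = {{{s,u},{t,v}} | s t u v. s \<in> {1..N} \<and> t \<in> {1..N} \<and> u \<in> {1..N} \<and> v \<in> {1..N}
                       \<and> s < t \<and> vx s = vx t \<and> u \<noteq> v \<and> vx u = vx v \<and> vx s < vx u}"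

definition Gamma :: "nat \<Rightarrow> (nat \<Rightarrow> nat) \<Rightarrow> (nat \<Rightarrow> nat) \<Rightarrow> nat set set set" where
  "Gamma N d vx = Gamma11 N d vx \<union> Gamma12 N d vx \<union> Gamma21 N d vx \<union> Gamma22 N d vx"

text \<open>The k-th pair of alpha (0-indexed) in the order of increasing minima.\<close>
definition edge_at :: "nat set set \<Rightarrow> nat \<Rightarrow> nat set" where
  "edge_at \<alpha> k = (THE p. p \<in> \<alpha> \<and> Min p = sorted_list_of_set (Min ` \<alpha>) ! k)"

text \<open>One switching step (step number k+1 in the paper's 1-indexed notation), with
  random value b in {1..N-2(e-(k+1))-1}.\<close>
definition switch_step :: "nat \<Rightarrow> nat set set \<Rightarrow> nat set set \<Rightarrow> nat \<Rightarrow> nat \<Rightarrow> nat set set" where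
  "switch_step N \<alpha> g k b =
     (let p = edge_at \<alpha> k; a = Min p; c = Max p;
          avoid = {a} \<union> \<Union>{edge_at \<alpha> m | m. k < m \<and> m < card \<alpha>};
          t1 = sorted_list_of_set ({1..N} - avoid) ! (b - 1);
          t2 = (THE t. {t1, t} \<in> g)
      in (g - {{a, c}, {t1, t2}}) \<union> {{a, t1}, {c, t2}})"

definition switch :: "nat \<Rightarrow> nat set set \<Rightarrow> nat set set \<Rightarrow> nat list \<Rightarrow> nat set set" where
  "switch N \<alpha> g bs = foldl (\<lambda>h k. switch_step N \<alpha> h k (bs ! k)) g [0..<card \<alpha>]"

text \<open>The switched matching g_alpha (I_alpha = 1 iff alpha is contained in g).\<close>
definition g_alpha :: "nat \<Rightarrow> nat set set \<Rightarrow> nat set set \<Rightarrow> nat list \<Rightarrow> nat set set" where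
  "g_alpha N \<alpha> g bs = (if \<alpha> \<subseteq> g then switch N \<alpha> g bs else g)"

text \<open>Range of the independent uniform variables B_{alpha,1},...,B_{alpha,e}
  (list position k corresponds to l = k+1).\<close>
definition B_space :: "nat \<Rightarrow> nat \<Rightarrow> nat list set" where
  "B_space N e = {bs. length bs = e \<and> (\<forall>k<e. bs ! k \<in> {1..N - 2 * (e - Suc k) - 1})}"

definition joint :: "nat \<Rightarrow> nat set set \<Rightarrow> (nat set set \<times> nat list) pmf" where
  "joint N \<alpha> = pair_pmf (pmf_of_set (PM N)) (pmf_of_set (B_space N (card \<alpha>)))"

definition p_alpha :: "nat \<Rightarrow> nat set set \<Rightarrow> real" where
  "p_alpha N \<alpha> = measure_pmf.prob (pmf_of_set (PM N)) {g. \<alpha> \<subseteq> g}"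

end

theory Submission
  imports Defs
begin

definition pm :: "nat set \<Rightarrow> nat set set \<Rightarrow> bool" where
  "pm S g \<longleftrightarrow> (\<forall>p\<in>g. card p = 2 \<and> p \<subseteq> S) \<and> (\<forall>s\<in>S. \<exists>!p. p \<in> g \<and> s \<in> p)"

lemma perfect_matching_pm: "perfect_matching N g = pm {1..N} g"
  unfolding perfect_matching_def pm_def by simp

definition partner :: "nat set set \<Rightarrow> nat \<Rightarrow> nat" where
  "partner g t = (THE u. {t,u} \<in> g)"

definition step :: "nat \<Rightarrow> nat \<Rightarrow> nat set set \<Rightarrow> nat \<Rightarrow> nat set set" where
  "step a c g t = (g - {{a,c},{t, partner g t}}) \<union> {{a,t},{c, partner g t}}"

lemma pm_edge_card: "pm S g \<Longrightarrow> p \<in> g \<Longrightarrow> card p = 2"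
  unfolding pm_def by auto

lemma pm_edge_sub: "pm S g \<Longrightarrow> p \<in> g \<Longrightarrow> p \<subseteq> S"
  unfolding pm_def by auto

lemma pm_uniq: "pm S g \<Longrightarrow> p \<in> g \<Longrightarrow> q \<in> g \<Longrightarrow> s \<in> p \<Longrightarrow> s \<in> q \<Longrightarrow> p = q"
  unfolding pm_def by (metis subsetD)

lemma pm_ex: "pm S g \<Longrightarrow> s \<in> S \<Longrightarrow> \<exists>p\<in>g. s \<in> p"
  unfolding pm_def by blast

lemma pair_ne: "{a,b} \<in> g \<Longrightarrow> pm S g \<Longrightarrow> a \<noteq> b"
  using pm_edge_card by fastforce

lemma partner_eq: assumes "pm S g" "{t,u} \<in> g" shows "partner g t = u"
  unfolding partner_def
proof (rule the_equality)
  show "{t,u} \<in> g" by fact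
  fix v assume "{t,v} \<in> g"
  then have "{t,v} = {t,u}" using pm_uniq[OF assms(1) _ assms(2), of "{t,v}" t] by auto
  moreover have "t \<noteq> u" using pair_ne assms by blast
  ultimately show "v = u" by (metis doubleton_eq_iff)
qed

lemma partner_in: assumes "pm S g" "t \<in> S" shows "{t, partner g t} \<in> g"
proof -
  obtain p where p: "p \<in> g" "t \<in> p" using pm_ex assms by blast
  have "card p = 2" using pm_edge_card assms p by blast
  then obtain x y where "p = {x,y}" "x \<noteq> y" by (meson card_2_iff)
  then obtain u where "p = {t,u}" using p by blast
  then show ?thesis using partner_eq[OF assms(1)] p by auto
qed

lemma pm_edge_in: "pm S g \<Longrightarrow> {a,b} \<in> g \<Longrightarrow> a \<in> S"
  using pm_edge_sub by blast

lemma L2: "p \<in> g \<Longrightarrow> a \<notin> p \<Longrightarrow> t \<notin> p \<Longrightarrow> p \<in> step a c g t"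
  unfolding step_def by auto

lemma swap_pm:
  assumes pm: "pm S g" and ac: "{a,c} \<in> g" and tu: "{t,u} \<in> g"
    and d: "a \<noteq> t" "a \<noteq> u" "c \<noteq> t" "c \<noteq> u"
  shows "pm S ((g - {{a,c},{t,u}}) \<union> {{a,t},{c,u}})"
proof -
  have ne: "a \<noteq> c" "t \<noteq> u" using pair_ne pm ac tu by blast+
  have S: "a \<in> S" "c \<in> S" "t \<in> S" "u \<in> S" using pm_edge_sub[OF pm ac] pm_edge_sub[OF pm tu] by auto
  let ?h = "(g - {{a,c},{t,u}}) \<union> {{a,t},{c,u}}"
  have 1: "\<forall>p\<in>?h. card p = 2 \<and> p \<subseteq> S"
  proof
    fix p assume "p \<in> ?h"
    then consider "p \<in> g" | "p = {a,t}" | "p = {c,u}" by blast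
    then show "card p = 2 \<and> p \<subseteq> S"
      by cases (use pm_edge_card[OF pm] pm_edge_sub[OF pm] S d ne in auto)
  qed
  have 2: "\<exists>!p. p \<in> ?h \<and> s \<in> p" if s: "s \<in> S" for s
  proof (cases "s \<in> {a,c,t,u}")
    case True
    have old: "p \<in> g \<Longrightarrow> s \<in> p \<Longrightarrow> p = {a,c} \<or> p = {t,u}" for p
      using True pm_uniq[OF pm _ ac] pm_uniq[OF pm _ tu] by blast
    show ?thesis
    proof (cases "s = a \<or> s = t")
      case True
      show ?thesis
      proof (rule ex1I[of _ "{a,t}"])
        show "{a,t} \<in> ?h \<and> s \<in> {a,t}" using True by blast
        fix y assume y: "y \<in> ?h \<and> s \<in> y"
        then consider "y \<in> g" "y \<noteq> {a,c}" "y \<noteq> {t,u}" | "y = {a,t}" | "y = {c,u}" by blast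
        then show "y = {a,t}"
        proof cases
          case 1 then show ?thesis using old[of y] y by blast
        next
          case 3 then show ?thesis using y True d ne by blast
        qed
      qed
    next
      case False
      then have "s = c \<or> s = u" using \<open>s \<in> {a,c,t,u}\<close> by auto
      show ?thesis
      proof (rule ex1I[of _ "{c,u}"])
        show "{c,u} \<in> ?h \<and> s \<in> {c,u}" using \<open>s = c \<or> s = u\<close> by blast
        fix y assume y: "y \<in> ?h \<and> s \<in> y"
        then consider "y \<in> g" "y \<noteq> {a,c}" "y \<noteq> {t,u}" | "y = {a,t}" | "y = {c,u}" by blast
        then show "y = {c,u}"
        proof cases
          case 1 then show ?thesis using old[of y] y by blast
        next
          case 2 then show ?thesis using y \<open>s = c \<or> s = u\<close> d ne by blast
        qed
      qed
    qed
  next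
    case False
    obtain p where p: "p \<in> g" "s \<in> p" using pm_ex pm s by blast
    have "p \<noteq> {a,c}" "p \<noteq> {t,u}" using p False by auto
    then have "p \<in> ?h" using p by auto
    moreover have "q = p" if q: "q \<in> ?h" "s \<in> q" for q
    proof -
      have "q \<in> g" using q False by auto
      then show ?thesis using pm_uniq[OF pm _ p(1) q(2) p(2)] by blast
    qed
    ultimately show ?thesis using p(2) by (metis (no_types, lifting))
  qed
  show ?thesis unfolding pm_def by (rule conjI[OF 1 ballI[OF 2]])
qed

lemma L1:
  assumes pm: "pm S g" and ac: "{a,c} \<in> g" and t: "t \<in> S" "t \<noteq> a"
  shows "pm S (step a c g t) \<and> {a,t} \<in> step a c g t \<and> step a t (step a c g t) c = g"
proof (cases "t = c")
  case True
  have pa: "partner g c = a" using partner_eq[OF pm, of c a] ac by (simp add: insert_commute)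
  have st: "step a c g c = g" unfolding step_def pa using ac by (auto simp: insert_commute)
  show ?thesis using True st pm ac by simp
next
  case False
  define u where "u = partner g t"
  have tu: "{t,u} \<in> g" using partner_in[OF pm t(1)] u_def by simp
  have tu_ne: "t \<noteq> u" using pair_ne tu pm by blast
  have ac_ne: "a \<noteq> c" using pair_ne ac pm by blast
  have ua: "u \<noteq> a"
  proof
    assume "u = a" then have "{t,u} = {a,c}" using pm_uniq[OF pm tu ac, of a] by auto
    then show False using False t(2) by (auto simp: doubleton_eq_iff)
  qed
  have uc: "u \<noteq> c"
  proof
    assume "u = c" then have "{t,u} = {a,c}" using pm_uniq[OF pm tu ac, of c] by auto
    then show False using False t(2) by (auto simp: doubleton_eq_iff)
  qed
  have h: "step a c g t = (g - {{a,c},{t,u}}) \<union> {{a,t},{c,u}}" unfolding step_def u_def ..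
  have pmh: "pm S (step a c g t)" unfolding h
    by (rule swap_pm[OF pm ac tu]) (use t False ua uc in auto)
  have cu: "{c,u} \<in> step a c g t" unfolding h by auto
  have pc: "partner (step a c g t) c = u" using partner_eq[OF pmh cu] .
  have n1: "{a,t} \<notin> g"
  proof
    assume "{a,t} \<in> g" then have "{a,t} = {a,c}" using pm_uniq[OF pm _ ac, of "{a,t}" a] by auto
    then show False using False by (auto simp: doubleton_eq_iff)
  qed
  have n2: "{c,u} \<notin> g"
  proof
    assume "{c,u} \<in> g" then have "{c,u} = {a,c}" using pm_uniq[OF pm _ ac, of "{c,u}" c] by auto
    then show False using ua ac_ne by (auto simp: doubleton_eq_iff)
  qed
  have "step a t (step a c g t) c = (step a c g t - {{a,t},{c,u}}) \<union> {{a,c},{t,u}}"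
    unfolding step_def[of a t] pc ..
  also have "\<dots> = g" unfolding h using n1 n2 ac tu by auto
  finally show ?thesis using pmh h by auto
qed

definition PMS :: "nat set \<Rightarrow> nat set set set" where
  "PMS S = {g. pm S g}"

lemma GS_bij:
  assumes a: "a \<in> S" "c \<in> S" "a \<noteq> c" "a \<notin> \<Union>E" "c \<notin> \<Union>E"
  shows "bij_betw (\<lambda>(g,t). step a c g t)
           ({g. pm S g \<and> insert {a,c} E \<subseteq> g} \<times> (S - \<Union>E - {a}))
           {h. pm S h \<and> E \<subseteq> h}"
proof (rule bij_betw_byWitness[where f' = "\<lambda>h. (step a (partner h a) h c, partner h a)"])
  show "\<forall>x\<in>{g. pm S g \<and> insert {a,c} E \<subseteq> g} \<times> (S - \<Union>E - {a}).
          (\<lambda>h. (step a (partner h a) h c, partner h a)) ((\<lambda>(g,t). step a c g t) x) = x"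
  proof
    fix x assume "x \<in> {g. pm S g \<and> insert {a,c} E \<subseteq> g} \<times> (S - \<Union>E - {a})"
    then obtain g t where x: "x = (g,t)" "pm S g" "{a,c} \<in> g" "t \<in> S" "t \<noteq> a" by auto
    have L: "pm S (step a c g t) \<and> {a,t} \<in> step a c g t \<and> step a t (step a c g t) c = g"
      using L1[OF x(2,3,4,5)] .
    have "partner (step a c g t) a = t" using partner_eq L by blast
    then show "(\<lambda>h. (step a (partner h a) h c, partner h a)) ((\<lambda>(g,t). step a c g t) x) = x"
      using L x(1) by simp
  qed
  show "\<forall>h\<in>{h. pm S h \<and> E \<subseteq> h}. (\<lambda>(g,t). step a c g t) ((\<lambda>h. (step a (partner h a) h c, partner h a)) h) = h"
  proof
    fix h assume h: "h \<in> {h. pm S h \<and> E \<subseteq> h}"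
    define t where "t = partner h a"
    have pmh: "pm S h" using h by auto
    have at: "{a,t} \<in> h" using partner_in[OF pmh a(1)] t_def by simp
    have "t \<noteq> a" using pair_ne[OF at pmh] by simp
    then have "step a c (step a t h c) t = h" using L1[OF pmh at a(2)] a(3) by simp
    then show "(\<lambda>(g,t). step a c g t) ((\<lambda>h. (step a (partner h a) h c, partner h a)) h) = h"
      using t_def by simp
  qed
  show "(\<lambda>(g,t). step a c g t) ` ({g. pm S g \<and> insert {a,c} E \<subseteq> g} \<times> (S - \<Union>E - {a}))
        \<subseteq> {h. pm S h \<and> E \<subseteq> h}"
  proof
    fix y assume "y \<in> (\<lambda>(g,t). step a c g t) ` ({g. pm S g \<and> insert {a,c} E \<subseteq> g} \<times> (S - \<Union>E - {a}))"
    then obtain g t where y: "y = step a c g t" "pm S g" "{a,c} \<in> g" "E \<subseteq> g" "t \<in> S" "t \<noteq> a" "t \<notin> \<Union>E"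
      by auto
    have "pm S y" using L1[OF y(2,3,5,6)] y(1) by simp
    moreover have "E \<subseteq> y"
    proof
      fix p assume p: "p \<in> E"
      show "p \<in> y" unfolding y(1) by (rule L2) (use p y a in auto)
    qed
    ultimately show "y \<in> {h. pm S h \<and> E \<subseteq> h}" by simp
  qed
  show "(\<lambda>h. (step a (partner h a) h c, partner h a)) ` {h. pm S h \<and> E \<subseteq> h}
        \<subseteq> {g. pm S g \<and> insert {a,c} E \<subseteq> g} \<times> (S - \<Union>E - {a})"
  proof
    fix y assume "y \<in> (\<lambda>h. (step a (partner h a) h c, partner h a)) ` {h. pm S h \<and> E \<subseteq> h}"
    then obtain h where y: "y = (step a (partner h a) h c, partner h a)" and pmh: "pm S h" and Eh: "E \<subseteq> h"
      by auto
    define t where "t = partner h a"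
    have at: "{a,t} \<in> h" using partner_in[OF pmh a(1)] t_def by simp
    have ta: "t \<noteq> a" using pair_ne[OF at pmh] by simp
    have tS: "t \<in> S" using pm_edge_sub[OF pmh at] by simp
    have tE: "t \<notin> \<Union>E"
    proof
      assume "t \<in> \<Union>E"
      then obtain p where p: "p \<in> E" "t \<in> p" by auto
      then have "p = {a,t}" using pm_uniq[OF pmh _ at, of p t] Eh by auto
      then show False using p a(4) by auto
    qed
    have L: "pm S (step a t h c) \<and> {a,c} \<in> step a t h c \<and> step a c (step a t h c) t = h"
      using L1[OF pmh at a(2)] a(3) by simp
    have "E \<subseteq> step a t h c"
    proof
      fix p assume p: "p \<in> E"
      show "p \<in> step a t h c" by (rule L2) (use p Eh a in auto)
    qed
    then show "y \<in> {g. pm S g \<and> insert {a,c} E \<subseteq> g} \<times> (S - \<Union>E - {a})"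
      using y t_def L ta tS tE by auto
  qed
qed

lemma finite_PMS: "finite S \<Longrightarrow> finite {g. pm S g}"
  by (rule finite_subset[of _ "Pow (Pow S)"]) (auto dest: pm_edge_sub)

lemma remove_edge_bij:
  assumes "a \<in> S" "c \<in> S" "a \<noteq> c"
  shows "bij_betw (\<lambda>g. g - {{a,c}}) {g. pm S g \<and> insert {a,c} {} \<subseteq> g} {g. pm (S - {a,c}) g}"
proof (rule bij_betw_byWitness[where f' = "insert {a,c}"])
  show "\<forall>g\<in>{g. pm S g \<and> insert {a,c} {} \<subseteq> g}. insert {a,c} (g - {{a,c}}) = g" by auto
  show "\<forall>g\<in>{g. pm (S - {a,c}) g}. insert {a,c} g - {{a,c}} = g"
    using pm_edge_sub by fastforce
  show "(\<lambda>g. g - {{a,c}}) ` {g. pm S g \<and> insert {a,c} {} \<subseteq> g} \<subseteq> {g. pm (S - {a,c}) g}"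
  proof
    fix y assume "y \<in> (\<lambda>g. g - {{a,c}}) ` {g. pm S g \<and> insert {a,c} {} \<subseteq> g}"
    then obtain g where y: "y = g - {{a,c}}" and pm: "pm S g" and ac: "{a,c} \<in> g" by auto
    have 1: "\<forall>p\<in>y. card p = 2 \<and> p \<subseteq> S - {a,c}"
    proof
      fix p assume p: "p \<in> y"
      have "p \<inter> {a,c} = {}" using pm_uniq[OF pm _ ac] p y by blast
      then show "card p = 2 \<and> p \<subseteq> S - {a,c}" using pm_edge_card[OF pm] pm_edge_sub[OF pm] p y by blast
    qed
    have 2: "\<exists>!p. p \<in> y \<and> s \<in> p" if s: "s \<in> S - {a,c}" for s
    proof -
      obtain p where p: "p \<in> g" "s \<in> p" using pm_ex[OF pm] s by blast
      have "p \<noteq> {a,c}" using p s by auto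
      then have "p \<in> y" using p y by auto
      moreover have "q = p" if "q \<in> y" "s \<in> q" for q
        using pm_uniq[OF pm _ p(1) _ p(2), of q] that y by blast
      ultimately show ?thesis using p(2) by (metis (no_types, lifting))
    qed
    show "y \<in> {g. pm (S - {a,c}) g}" unfolding mem_Collect_eq pm_def by (rule conjI[OF 1 ballI[OF 2]])
  qed
  show "insert {a,c} ` {g. pm (S - {a,c}) g} \<subseteq> {g. pm S g \<and> insert {a,c} {} \<subseteq> g}"
  proof
    fix y assume "y \<in> insert {a,c} ` {g. pm (S - {a,c}) g}"
    then obtain g where y: "y = insert {a,c} g" and pm: "pm (S - {a,c}) g" by auto
    have 1: "\<forall>p\<in>y. card p = 2 \<and> p \<subseteq> S"
      using pm_edge_card[OF pm] pm_edge_sub[OF pm] y assms by auto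
    have 2: "\<exists>!p. p \<in> y \<and> s \<in> p" if s: "s \<in> S" for s
    proof (cases "s \<in> {a,c}")
      case True
      have "q = {a,c}" if "q \<in> y" "s \<in> q" for q
        using that y True pm_edge_sub[OF pm] by blast
      then show ?thesis using True y by (metis insertI1)
    next
      case False
      obtain p where p: "p \<in> g" "s \<in> p" using pm_ex[OF pm] s False by blast
      have "q = p" if "q \<in> y" "s \<in> q" for q
        using pm_uniq[OF pm _ p(1) _ p(2), of q] that y False by blast
      then show ?thesis using p y by (metis insertCI)
    qed
    show "y \<in> {g. pm S g \<and> insert {a,c} {} \<subseteq> g}"
      using conjI[OF 1 ballI[OF 2]] y unfolding pm_def by simp
  qed
qed

lemma pm_empty: "{g. pm {} g} = {{}}"
  unfolding pm_def by (auto dest: card_2_iff[THEN iffD1])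

lemma card_step:
  assumes "finite S" "a \<in> S" "c \<in> S" "a \<noteq> c"
  shows "card {g. pm S g} = card {g. pm (S - {a,c}) g} * (card S - 1)"
proof -
  have b1: "bij_betw (\<lambda>(g,t). step a c g t)
           ({g. pm S g \<and> insert {a,c} {} \<subseteq> g} \<times> (S - \<Union>{} - {a})) {h. pm S h \<and> {} \<subseteq> h}"
    by (rule GS_bij) (use assms in auto)
  have "card {g. pm S g} = card ({g. pm S g \<and> insert {a,c} {} \<subseteq> g} \<times> (S - {a}))"
    using bij_betw_same_card[OF b1] by simp
  also have "\<dots> = card {g. pm S g \<and> insert {a,c} {} \<subseteq> g} * (card S - 1)"
    using assms by (simp add: card_cartesian_product)
  also have "card {g. pm S g \<and> insert {a,c} {} \<subseteq> g} = card {g. pm (S - {a,c}) g}"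
    using bij_betw_same_card[OF remove_edge_bij[OF assms(2-4)]] .
  finally show ?thesis .
qed

lemma card_PMS: "finite S \<Longrightarrow> even (card S) \<Longrightarrow> card {g. pm S g} = dfact (card S - 1)"
proof (induction "card S" arbitrary: S rule: less_induct)
  case less
  show ?case
  proof (cases "S = {}")
    case True then show ?thesis using pm_empty by simp
  next
    case False
    then obtain a where a: "a \<in> S" by auto
    have "card S \<noteq> 1" using less.prems by auto
    moreover have "card S \<noteq> 0" using False less.prems(1) by simp
    ultimately have "card S \<ge> 2" by arith
    then have "card (S - {a}) \<noteq> 0" using a less.prems(1) card_Diff_singleton[OF a] by linarith
    then obtain c where c: "c \<in> S - {a}" using card_0_eq[of "S - {a}"] less.prems(1)
      by (metis all_not_in_conv finite_Diff)
    have cS: "card (S - {a,c}) = card S - 2" using a c less.prems(1)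
      by (subst card_Diff_subset) auto
    note ge = \<open>card S \<ge> 2\<close>
    have IH: "card {g. pm (S - {a,c}) g} = dfact (card (S - {a,c}) - 1)"
      using less.hyps[of "S - {a,c}"] cS ge less.prems by simp
    have "card {g. pm S g} = dfact (card S - 3) * (card S - 1)"
      using card_step[OF less.prems(1) a, of c] c IH cS by (simp add: numeral_3_eq_3)
    also have "\<dots> = dfact (card S - 1)"
    proof -
      obtain k where k: "card S = k + 2" using ge by (metis add.commute le_add_diff_inverse)
      show ?thesis
      proof (cases k)
        case 0 then show ?thesis using k by simp
      next
        case (Suc j)
        show ?thesis using k Suc less.prems(2) by (cases j) auto
      qed
    qed
    finally show ?thesis .
  qed
qed

lemma idx_bij:
  assumes "finite T"
  shows "bij_betw (\<lambda>b. sorted_list_of_set T ! (b - 1)) {1..card T} T"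
proof -
  have 1: "bij_betw (\<lambda>b. b - 1) {1..card T} {..<card T}"
    by (rule bij_betw_byWitness[where f' = Suc]) auto
  have 2: "bij_betw ((!) (sorted_list_of_set T)) {..<card T} T"
    by (rule bij_betw_nth) (use assms in auto)
  show ?thesis using bij_betw_trans[OF 1 2] by (simp add: comp_def)
qed

lemma edge_at_1:
  assumes "x < y"
  shows "edge_at {{x,y}} 0 = {x,y}"
  unfolding edge_at_def using assms by (intro the_equality) auto

lemma edge_at_2:
  assumes "x < y" "z < w" "x < z"
  shows "edge_at {{x,y},{z,w}} 0 = {x,y}" "edge_at {{x,y},{z,w}} 1 = {z,w}"
proof -
  have m: "Min ` {{x,y},{z,w}} = {x,z}" using assms by auto
  have s: "sorted_list_of_set {x,z} = [x,z]" using assms by simp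
  show "edge_at {{x,y},{z,w}} 0 = {x,y}"
    unfolding edge_at_def m s using assms by (intro the_equality) auto
  show "edge_at {{x,y},{z,w}} 1 = {z,w}"
    unfolding edge_at_def m s using assms by (intro the_equality) auto
qed

lemma switch_step_eq:
  "switch_step N \<alpha> g k b = step (Min (edge_at \<alpha> k)) (Max (edge_at \<alpha> k)) g
     (sorted_list_of_set ({1..N} - ({Min (edge_at \<alpha> k)} \<union> \<Union>{edge_at \<alpha> m | m. k < m \<and> m < card \<alpha>})) ! (b - 1))"
  unfolding switch_step_def step_def partner_def Let_def ..

lemma switch_1:
  assumes "x < y"
  shows "switch N {{x,y}} g bs = step x y g (sorted_list_of_set ({1..N} - {x}) ! (bs!0 - 1))"
proof -
  have "{edge_at {{x,y}} m | m. 0 < m \<and> m < card {{x,y}}} = {}" by auto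
  then show ?thesis
    unfolding switch_def switch_step_eq
    using edge_at_1[OF assms] assms by simp
qed

lemma switch_2:
  assumes "x < y" "z < w" "x < z" "{x,y} \<inter> {z,w} = {}"
  shows "switch N {{x,y},{z,w}} g bs =
     step z w (step x y g (sorted_list_of_set ({1..N} - \<Union>{{z,w}} - {x}) ! (bs!0 - 1)))
        (sorted_list_of_set ({1..N} - \<Union>{} - {z}) ! (bs!1 - 1))"
proof -
  have c: "card {{x,y},{z,w}} = 2" using assms by (auto simp: card_insert_if)
  have u: "[0..<2] = [0,1::nat]" by (simp add: upt_rec)
  have sw: "switch N {{x,y},{z,w}} g bs = switch_step N {{x,y},{z,w}} (switch_step N {{x,y},{z,w}} g 0 (bs!0)) 1 (bs!1)"
    unfolding switch_def c u by simp
  have e0: "{edge_at {{x,y},{z,w}} m | m. 0 < m \<and> m < 2} = {{z,w}}"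
  proof -
    have "\<And>m::nat. (0 < m \<and> m < 2) \<longleftrightarrow> m = 1" by auto
    then have "{edge_at {{x,y},{z,w}} m | m. 0 < m \<and> m < 2} = {edge_at {{x,y},{z,w}} 1}" by simp
    then show ?thesis using edge_at_2[OF assms(1-3)] by simp
  qed
  have e1: "{edge_at {{x,y},{z,w}} m | m. 1 < m \<and> m < 2} = {}" by auto
  have s0: "{1..N} - ({x} \<union> \<Union>{{z,w}}) = {1..N} - \<Union>{{z,w}} - {x}" by auto
  have s1: "{1..N} - ({z} \<union> \<Union>{}) = {1..N} - \<Union>{} - {z}" by auto
  have m: "Min {x,y} = x" "Max {x,y} = y" "Min {z,w} = z" "Max {z,w} = w" using assms by auto
  show ?thesis
    unfolding sw switch_step_eq c e0 e1 edge_at_2[OF assms(1-3)] m s0 s1 ..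
qed

lemma B1: "bij_betw (\<lambda>bs. bs!0) (B_space N 1) {1..N-1}"
  by (rule bij_betw_byWitness[where f' = "\<lambda>b. [b]"])
     (auto simp: B_space_def length_Suc_conv)

lemma B2: "bij_betw (\<lambda>bs. (bs!0, bs!1)) (B_space N 2) ({1..N-3} \<times> {1..N-1})"
proof (rule bij_betw_byWitness[where f' = "\<lambda>(i,j). [i,j]"])
  have len2: "length bs = 2 \<Longrightarrow> bs = [bs!0, bs!1]" for bs :: "nat list"
    by (cases bs; cases "tl bs"; auto)
  have k: "(\<forall>k<2. P k) \<longleftrightarrow> P 0 \<and> P (1::nat)" for P by (auto simp: less_2_cases_iff)
  show "\<forall>a\<in>B_space N 2. (\<lambda>(i, j). [i, j]) (a ! 0, a ! 1) = a"
    using len2 by (auto simp: B_space_def)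
  show "\<forall>a'\<in>{1..N - 3} \<times> {1..N - 1}. ((\<lambda>(i, j). [i, j]) a' ! 0, (\<lambda>(i, j). [i, j]) a' ! 1) = a'" by auto
  show "(\<lambda>bs. (bs ! 0, bs ! 1)) ` B_space N 2 \<subseteq> {1..N - 3} \<times> {1..N - 1}"
    by (auto simp: B_space_def k)
  show "(\<lambda>(i, j). [i, j]) ` ({1..N - 3} \<times> {1..N - 1}) \<subseteq> B_space N 2"
    by (auto simp: B_space_def k)
qed

lemma shape1:
  assumes xy: "x < y" "x \<in> {1..N}" "y \<in> {1..N}"
  shows "bij_betw (\<lambda>(g,bs). switch N {{x,y}} g bs)
           ({g. pm {1..N} g \<and> {{x,y}} \<subseteq> g} \<times> B_space N (card {{x,y}})) {g. pm {1..N} g}"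
    and "card (B_space N (card {{x,y}})) = ffact2 (N - 1) (card {{x,y}})"
proof -
  define T where "T = {1..N} - \<Union>{} - {x}"
  define A where "A = {g. pm {1..N} g \<and> insert {x,y} {} \<subseteq> g}"
  have cT: "card T = N - 1" using xy unfolding T_def by (simp add: card_Diff_singleton)
  have f1: "bij_betw (map_prod id (\<lambda>bs. bs!0)) (A \<times> B_space N 1) (A \<times> {1..card T})"
    unfolding cT by (rule bij_betw_map_prod[OF bij_betw_id B1])
  have f2: "bij_betw (map_prod id (\<lambda>b. sorted_list_of_set T ! (b - 1))) (A \<times> {1..card T}) (A \<times> T)"
    by (rule bij_betw_map_prod[OF bij_betw_id idx_bij]) (simp add: T_def)
  have f3: "bij_betw (\<lambda>(g,t). step x y g t) (A \<times> T) {h. pm {1..N} h \<and> {} \<subseteq> h}"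
    unfolding A_def T_def by (rule GS_bij) (use xy in auto)
  have all: "bij_betw ((\<lambda>(g,t). step x y g t) \<circ> (map_prod id (\<lambda>b. sorted_list_of_set T ! (b - 1))) \<circ> map_prod id (\<lambda>bs. bs!0))
     (A \<times> B_space N 1) {h. pm {1..N} h \<and> {} \<subseteq> h}"
    using bij_betw_trans[OF bij_betw_trans[OF f1 f2] f3] by (simp add: comp_assoc)
  have c1: "card {{x,y}} = 1" by simp
  have T': "T = {1..N} - {x}" unfolding T_def by simp
  show "bij_betw (\<lambda>(g,bs). switch N {{x,y}} g bs)
           ({g. pm {1..N} g \<and> {{x,y}} \<subseteq> g} \<times> B_space N (card {{x,y}})) {g. pm {1..N} g}"
  proof -
    have eqA: "{g. pm {1..N} g \<and> {{x,y}} \<subseteq> g} = A" by (auto simp: A_def)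
    have eqC: "{h. pm {1..N} h \<and> {} \<subseteq> h} = {g. pm {1..N} g}" by simp
    show ?thesis unfolding c1 eqA
    by (rule bij_betw_cong[THEN iffD1, OF _ all[unfolded eqC]]) (auto simp: A_def switch_1[OF xy(1)] T')
  qed
  show "card (B_space N (card {{x,y}})) = ffact2 (N - 1) (card {{x,y}})"
    unfolding c1 ffact2_def using bij_betw_same_card[OF B1] by simp
qed

lemma shape2:
  assumes xy: "x < y" "z < w" "x < z" "{x,y} \<inter> {z,w} = {}"
    "x \<in> {1..N}" "y \<in> {1..N}" "z \<in> {1..N}" "w \<in> {1..N}"
  shows "bij_betw (\<lambda>(g,bs). switch N {{x,y},{z,w}} g bs)
           ({g. pm {1..N} g \<and> {{x,y},{z,w}} \<subseteq> g} \<times> B_space N (card {{x,y},{z,w}})) {g. pm {1..N} g}"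
    and "card (B_space N (card {{x,y},{z,w}})) = ffact2 (N - 1) (card {{x,y},{z,w}})"
proof -
  define T0 where "T0 = {1..N} - \<Union>{{z,w}} - {x}"
  define T1 where "T1 = {1..N} - \<Union>{} - {z}"
  define A where "A = {g. pm {1..N} g \<and> insert {x,y} {{z,w}} \<subseteq> g}"
  define C where "C = {h. pm {1..N} h \<and> insert {z,w} {} \<subseteq> h}"
  have dist: "x \<noteq> z" "x \<noteq> w" "y \<noteq> z" "y \<noteq> w" using xy(4) by auto
  have cT0: "card T0 = N - 3"
  proof -
    have "T0 = {1..N} - {x,z,w}" unfolding T0_def by auto
    moreover have "card {x,z,w} = 3" using dist xy(2) by auto
    ultimately show ?thesis using xy by (simp add: card_Diff_subset)
  qed
  have cT1: "card T1 = N - 1" using xy unfolding T1_def by (simp add: card_Diff_singleton)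
  have f1: "bij_betw (\<lambda>(g,bs). ((g, bs!0), bs!1)) (A \<times> B_space N 2) ((A \<times> {1..card T0}) \<times> {1..card T1})"
  proof -
    have "bij_betw (map_prod id (\<lambda>bs. (bs!0, bs!1))) (A \<times> B_space N 2) (A \<times> ({1..card T0} \<times> {1..card T1}))"
      unfolding cT0 cT1 by (rule bij_betw_map_prod[OF bij_betw_id B2])
    moreover have "bij_betw (\<lambda>(g,(i,j)). ((g,i),j)) (A \<times> ({1..card T0} \<times> {1..card T1})) ((A \<times> {1..card T0}) \<times> {1..card T1})"
      by (rule bij_betw_byWitness[where f' = "\<lambda>((g,i),j). (g,(i,j))"]) auto
    ultimately have "bij_betw ((\<lambda>(g,(i,j)). ((g,i),j)) \<circ> map_prod id (\<lambda>bs. (bs!0, bs!1))) (A \<times> B_space N 2) ((A \<times> {1..card T0}) \<times> {1..card T1})"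
      by (rule bij_betw_trans)
    then show ?thesis by (rule bij_betw_cong[THEN iffD1, rotated]) auto
  qed
  have f2: "bij_betw (map_prod (map_prod id (\<lambda>b. sorted_list_of_set T0 ! (b - 1))) (\<lambda>b. sorted_list_of_set T1 ! (b - 1)))
      ((A \<times> {1..card T0}) \<times> {1..card T1}) ((A \<times> T0) \<times> T1)"
    by (intro bij_betw_map_prod bij_betw_id idx_bij) (simp_all add: T0_def T1_def)
  have f3: "bij_betw (map_prod (\<lambda>(g,t). step x y g t) id) ((A \<times> T0) \<times> T1) (C \<times> T1)"
    unfolding A_def T0_def C_def
    by (intro bij_betw_map_prod bij_betw_id GS_bij) (use xy in auto)
  have f4: "bij_betw (\<lambda>(g,t). step z w g t) (C \<times> T1) {h. pm {1..N} h \<and> {} \<subseteq> h}"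
    unfolding C_def T1_def by (rule GS_bij) (use xy in auto)
  have all: "bij_betw ((\<lambda>(g,t). step z w g t) \<circ> map_prod (\<lambda>(g,t). step x y g t) id \<circ>
       map_prod (map_prod id (\<lambda>b. sorted_list_of_set T0 ! (b - 1))) (\<lambda>b. sorted_list_of_set T1 ! (b - 1))
       \<circ> (\<lambda>(g,bs). ((g, bs!0), bs!1)))
     (A \<times> B_space N 2) {h. pm {1..N} h \<and> {} \<subseteq> h}"
    using bij_betw_trans[OF bij_betw_trans[OF bij_betw_trans[OF f1 f2] f3] f4] by (simp add: comp_assoc)
  have c2: "card {{x,y},{z,w}} = 2" using xy dist by (auto simp: card_insert_if doubleton_eq_iff)
  show "bij_betw (\<lambda>(g,bs). switch N {{x,y},{z,w}} g bs)
           ({g. pm {1..N} g \<and> {{x,y},{z,w}} \<subseteq> g} \<times> B_space N (card {{x,y},{z,w}})) {g. pm {1..N} g}"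
  proof -
    have eqA: "{g. pm {1..N} g \<and> {{x,y},{z,w}} \<subseteq> g} = A" by (auto simp: A_def)
    have eqC: "{h. pm {1..N} h \<and> {} \<subseteq> h} = {g. pm {1..N} g}" by simp
    show ?thesis unfolding c2 eqA
    by (rule bij_betw_cong[THEN iffD1, OF _ all[unfolded eqC]]) (auto simp: A_def switch_2[OF xy(1-4)] T0_def T1_def)
  qed
  show "card (B_space N (card {{x,y},{z,w}})) = ffact2 (N - 1) (card {{x,y},{z,w}})"
    unfolding c2 ffact2_def using bij_betw_same_card[OF B2] by (simp add: lessThan_nat_numeral card_cartesian_product)
qed

lemma norm4:
  fixes p q r s :: nat
  assumes "p \<noteq> q" "r \<noteq> s" "p \<noteq> r" "p \<noteq> s" "q \<noteq> r" "q \<noteq> s"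
    "p \<in> X" "q \<in> X" "r \<in> X" "s \<in> X"
  shows "\<exists>x y z w. {{p,q},{r,s}} = {{x,y},{z,w}} \<and> x < y \<and> z < w \<and> x < z \<and> {x,y} \<inter> {z,w} = {}
     \<and> x \<in> X \<and> y \<in> X \<and> z \<in> X \<and> w \<in> X"
proof -
  have e1: "{p,q} = {min p q, max p q}" "{r,s} = {min r s, max r s}" by (auto simp: min_def max_def)
  have l: "min p q < max p q" "min r s < max r s" using assms by (auto simp: min_def max_def)
  have m: "min p q \<noteq> min r s" using assms by (auto simp: min_def)
  show ?thesis
  proof (cases "min p q < min r s")
    case True
    show ?thesis
      by (rule exI[of _ "min p q"], rule exI[of _ "max p q"], rule exI[of _ "min r s"], rule exI[of _ "max r s"])
         (use True l assms in \<open>auto simp: min_def max_def\<close>)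
  next
    case False
    then have F: "min r s < min p q" using m by linarith
    show ?thesis
      by (rule exI[of _ "min r s"], rule exI[of _ "max r s"], rule exI[of _ "min p q"], rule exI[of _ "max p q"])
         (use F l assms in \<open>auto simp: min_def max_def\<close>)
  qed
qed

lemma Gamma_shape:
  assumes "\<alpha> \<in> Gamma N d vx"
  shows "(\<exists>x y. \<alpha> = {{x,y}} \<and> x < y \<and> x \<in> {1..N} \<and> y \<in> {1..N}) \<or>
         (\<exists>x y z w. \<alpha> = {{x,y},{z,w}} \<and> x < y \<and> z < w \<and> x < z \<and> {x,y} \<inter> {z,w} = {}
            \<and> x \<in> {1..N} \<and> y \<in> {1..N} \<and> z \<in> {1..N} \<and> w \<in> {1..N})"
  using assms unfolding Gamma_def
proof (elim UnE)
  assume "\<alpha> \<in> Gamma11 N d vx"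
  then obtain s t where st: "\<alpha> = {{s,t}}" "s \<in> {1..N}" "t \<in> {1..N}" "vx s < vx t"
    unfolding Gamma11_def by blast
  then have "s \<noteq> t" by auto
  then show ?thesis
    by (intro disjI1 exI[of _ "min s t"] exI[of _ "max s t"]) (use st in \<open>auto simp: min_def max_def\<close>)
next
  assume "\<alpha> \<in> Gamma21 N d vx"
  then obtain s t where st: "\<alpha> = {{s,t}}" "s \<in> {1..N}" "t \<in> {1..N}" "s < t"
    unfolding Gamma21_def by blast
  then show ?thesis by blast
next
  assume "\<alpha> \<in> Gamma12 N d vx"
  then obtain s t u v where st: "\<alpha> = {{s,u},{t,v}}" "s \<in> {1..N}" "t \<in> {1..N}" "u \<in> {1..N}" "v \<in> {1..N}"
    "vx s < vx t" "d (vx s) = 1" "d (vx t) = 1" "u \<noteq> v" "vx u = vx v" "d (vx u) = 2"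
    unfolding Gamma12_def by blast
  have "s \<noteq> u" "s \<noteq> v" "t \<noteq> u" "t \<noteq> v" "s \<noteq> t" using st by auto
  then show ?thesis using norm4[of s u t v "{1..N}"] st by metis
next
  assume "\<alpha> \<in> Gamma22 N d vx"
  then obtain s t u v where st: "\<alpha> = {{s,u},{t,v}}" "s \<in> {1..N}" "t \<in> {1..N}" "u \<in> {1..N}" "v \<in> {1..N}"
    "s < t" "vx s = vx t" "u \<noteq> v" "vx u = vx v" "vx s < vx u"
    unfolding Gamma22_def by blast
  have "s \<noteq> u" "s \<noteq> v" "t \<noteq> u" "t \<noteq> v" "s \<noteq> t" using st by auto
  then show ?thesis using norm4[of s u t v "{1..N}"] st by metis
qed

lemma switch_bij:
  assumes "\<alpha> \<in> Gamma N d vx"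
  shows "bij_betw (\<lambda>(g,bs). switch N \<alpha> g bs)
           ({g. pm {1..N} g \<and> \<alpha> \<subseteq> g} \<times> B_space N (card \<alpha>)) {g. pm {1..N} g}
        \<and> card (B_space N (card \<alpha>)) = ffact2 (N - 1) (card \<alpha>)"
  using Gamma_shape[OF assms]
proof (elim disjE exE conjE)
  fix x y assume h: "\<alpha> = {{x,y}}" "x < y" "x \<in> {1..N}" "y \<in> {1..N}"
  show ?thesis using shape1[OF h(2-4)] h(1) by simp
next
  fix x y z w assume h: "\<alpha> = {{x,y},{z,w}}" "x < y" "z < w" "x < z" "{x,y} \<inter> {z,w} = {}"
    "x \<in> {1..N}" "y \<in> {1..N}" "z \<in> {1..N}" "w \<in> {1..N}"
  show ?thesis using shape2[OF h(2-9)] h(1) by simp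
qed

lemma dfact_pos: "dfact n > 0"
  by (induction n rule: dfact.induct) auto

lemma pair_pmf_of_set:
  assumes "finite X" "X \<noteq> {}" "finite Y" "Y \<noteq> {}"
  shows "pair_pmf (pmf_of_set X) (pmf_of_set Y) = pmf_of_set (X \<times> Y)"
proof (rule pmf_eqI)
  fix i :: "'a \<times> 'b"
  obtain a b where i: "i = (a,b)" by force
  show "pmf (pair_pmf (pmf_of_set X) (pmf_of_set Y)) i = pmf (pmf_of_set (X \<times> Y)) i"
    unfolding i pmf_pair using assms
    by (simp add: card_cartesian_product indicator_def)
qed

lemma card_bij_filter:
  assumes "bij_betw f X Y"
  shows "card {x\<in>X. Q (f x)} = card {y\<in>Y. Q y}"
proof -
  have "bij_betw f {x\<in>X. Q (f x)} {y\<in>Y. Q y}"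
    using assms unfolding bij_betw_def inj_on_def by auto
  then show ?thesis by (rule bij_betw_same_card)
qed

lemma main:
  assumes "even N" "\<alpha> \<in> Gamma N d vx"
  defines "P \<equiv> PM N" and "B \<equiv> B_space N (card \<alpha>)"
  shows "finite P" "P \<noteq> {}" "finite B" "B \<noteq> {}" "card P = dfact (N - 1)"
    "card B = ffact2 (N - 1) (card \<alpha>)"
    "real (card {g\<in>P. \<alpha> \<subseteq> g}) * real (card B) = real (card P)"
    "\<And>Q. measure_pmf.prob (joint N \<alpha>) {(g, bs). \<alpha> \<subseteq> g \<and> Q (g_alpha N \<alpha> g bs)}
          = real (card {h\<in>P. Q h}) / (real (card P) * real (card B))"
proof -
  have PP: "P = {g. pm {1..N} g}" unfolding P_def PM_def perfect_matching_pm ..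
  show cP: "card P = dfact (N - 1)" unfolding PP using card_PMS[of "{1..N}"] assms(1) by simp
  then have "card P > 0" using dfact_pos by simp
  then show fP: "finite P" and nP: "P \<noteq> {}" using card_gt_0_iff by blast+
  have sb: "bij_betw (\<lambda>(g,bs). switch N \<alpha> g bs) ({g\<in>P. \<alpha> \<subseteq> g} \<times> B) P"
    and cB: "card B = ffact2 (N - 1) (card \<alpha>)"
    using switch_bij[OF assms(2)] unfolding PP B_def by auto
  show "card B = ffact2 (N - 1) (card \<alpha>)" by (rule cB)
  have cAB: "card ({g\<in>P. \<alpha> \<subseteq> g} \<times> B) = card P" using bij_betw_same_card[OF sb] .
  then have "card ({g\<in>P. \<alpha> \<subseteq> g} \<times> B) > 0" using \<open>card P > 0\<close> by simp
  then have fAB: "finite ({g\<in>P. \<alpha> \<subseteq> g} \<times> B)" and nAB: "{g\<in>P. \<alpha> \<subseteq> g} \<times> B \<noteq> {}"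
    using card_gt_0_iff by blast+
  then have nA: "{g\<in>P. \<alpha> \<subseteq> g} \<noteq> {}" and nB: "B \<noteq> {}" by auto
  then show fB: "finite B" using fAB finite_cartesian_productD2 by blast
  show "B \<noteq> {}" by (rule nB)
  show "real (card {g\<in>P. \<alpha> \<subseteq> g}) * real (card B) = real (card P)"
    using cAB by (simp add: card_cartesian_product flip: of_nat_mult)
  fix Q :: "nat set set \<Rightarrow> bool"
  have j: "joint N \<alpha> = pmf_of_set (P \<times> B)"
    unfolding joint_def P_def[symmetric] B_def[symmetric] by (rule pair_pmf_of_set[OF fP nP fB nB])
  have "(P \<times> B) \<inter> {(g, bs). \<alpha> \<subseteq> g \<and> Q (g_alpha N \<alpha> g bs)}
        = {x \<in> {g\<in>P. \<alpha> \<subseteq> g} \<times> B. Q ((\<lambda>(g,bs). switch N \<alpha> g bs) x)}"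
    by (auto simp: g_alpha_def)
  then have "card ((P \<times> B) \<inter> {(g, bs). \<alpha> \<subseteq> g \<and> Q (g_alpha N \<alpha> g bs)}) = card {h\<in>P. Q h}"
    using card_bij_filter[OF sb] by simp
  then show "measure_pmf.prob (joint N \<alpha>) {(g, bs). \<alpha> \<subseteq> g \<and> Q (g_alpha N \<alpha> g bs)}
          = real (card {h\<in>P. Q h}) / (real (card P) * real (card B))"
    unfolding j using fP nP fB nB
    by (subst measure_pmf_of_set) (auto simp: card_cartesian_product)
qed

theorem proposition4p2:
  fixes n N :: nat and d vx :: "nat \<Rightarrow> nat" and \<alpha> g' :: "nat set set"
  assumes "N = (\<Sum>i=1..n. d i)"
    and "even N"
    and "\<forall>s\<in>{1..N}. vx s \<in> {1..n}"
    and "\<forall>i\<in>{1..n}. card {s\<in>{1..N}. vx s = i} = d i"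
    and "\<alpha> \<in> Gamma N d vx"
    and "perfect_matching N g'"
  shows "measure_pmf.prob (joint N \<alpha>) {(g, bs). g_alpha N \<alpha> g bs = g' \<and> \<alpha> \<subseteq> g}
           = measure_pmf.prob (pmf_of_set (PM N)) {g'} * p_alpha N \<alpha>
       \<and> measure_pmf.prob (pmf_of_set (PM N)) {g'} * p_alpha N \<alpha>
           = 1 / real (dfact (N - 1)) * (1 / real (ffact2 (N - 1) (card \<alpha>)))
       \<and> (\<forall>x :: nat set set \<Rightarrow> bool.
            measure_pmf.prob (joint N \<alpha>)
              {(g, bs). \<alpha> \<subseteq> g \<and> (\<forall>\<beta>\<in>Gamma N d vx. (\<beta> \<subseteq> g_alpha N \<alpha> g bs) = x \<beta>)}
            = measure_pmf.prob (pmf_of_set (PM N)) {g. \<forall>\<beta>\<in>Gamma N d vx. (\<beta> \<subseteq> g) = x \<beta>}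
              * p_alpha N \<alpha>)"
proof -
  let ?P = "PM N" and ?B = "B_space N (card \<alpha>)"
  note m = main[OF assms(2) assms(5)]
  have fP: "finite ?P" and nP: "?P \<noteq> {}" using m by auto
  have cP0: "real (card ?P) > 0" using fP nP by (simp add: card_gt_0_iff)
  have cB0: "real (card ?B) > 0" using m(3,4) by (simp add: card_gt_0_iff)
  have prob: "measure_pmf.prob (pmf_of_set ?P) {g. R g} = real (card {h\<in>?P. R h}) / real (card ?P)" for R
    using fP nP by (subst measure_pmf_of_set) (auto simp: Int_def)
  have pa: "p_alpha N \<alpha> = 1 / real (card ?B)"
  proof -
    have "p_alpha N \<alpha> = real (card {g\<in>?P. \<alpha> \<subseteq> g}) / real (card ?P)"
      unfolding p_alpha_def by (rule prob)
    also have "\<dots> = 1 / real (card ?B)" using m(7) cP0 cB0 by (simp add: field_simps)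
    finally show ?thesis .
  qed
  have g'P: "g' \<in> ?P" using assms(6) by (simp add: PM_def)
  have pg: "measure_pmf.prob (pmf_of_set ?P) {g'} = 1 / real (card ?P)"
  proof -
    have "{g'} = {g. g = g'}" by auto
    moreover have "{h\<in>?P. h = g'} = {g'}" using g'P by auto
    ultimately show ?thesis using prob[of "\<lambda>g. g = g'"] by simp
  qed
  have c1: "measure_pmf.prob (joint N \<alpha>) {(g, bs). g_alpha N \<alpha> g bs = g' \<and> \<alpha> \<subseteq> g}
           = measure_pmf.prob (pmf_of_set ?P) {g'} * p_alpha N \<alpha>"
  proof -
    have "{(g, bs). g_alpha N \<alpha> g bs = g' \<and> \<alpha> \<subseteq> g} = {(g, bs). \<alpha> \<subseteq> g \<and> g_alpha N \<alpha> g bs = g'}"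
      by auto
    moreover have "{h\<in>?P. h = g'} = {g'}" using g'P by auto
    ultimately show ?thesis using m(8)[of "\<lambda>h. h = g'"] pg pa by simp
  qed
  have c2: "measure_pmf.prob (pmf_of_set ?P) {g'} * p_alpha N \<alpha>
           = 1 / real (dfact (N - 1)) * (1 / real (ffact2 (N - 1) (card \<alpha>)))"
    using pg pa m(5,6) by simp
  have c3: "measure_pmf.prob (joint N \<alpha>)
              {(g, bs). \<alpha> \<subseteq> g \<and> (\<forall>\<beta>\<in>Gamma N d vx. (\<beta> \<subseteq> g_alpha N \<alpha> g bs) = x \<beta>)}
            = measure_pmf.prob (pmf_of_set ?P) {g. \<forall>\<beta>\<in>Gamma N d vx. (\<beta> \<subseteq> g) = x \<beta>}
              * p_alpha N \<alpha>" for x :: "nat set set \<Rightarrow> bool"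
    using m(8)[of "\<lambda>h. \<forall>\<beta>\<in>Gamma N d vx. (\<beta> \<subseteq> h) = x \<beta>"]
      prob[of "\<lambda>h. \<forall>\<beta>\<in>Gamma N d vx. (\<beta> \<subseteq> h) = x \<beta>"] pa by simp
  show ?thesis using c1 c2 c3 by blast
qed

end
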